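(* Let $i\geq 1$. For $n\geq 0$, let $M(i,n)$ be the set of pairs $(L_1,L_2)$ of walks of length $n$ with steps $(1,1)$ and $(1,-1)$, where $L_1$ starts at $(0,0)$ and $L_2$ starts at $(0,2i)$, such that $L_1$ and $L_2$ intersect (share a common lattice point). Let $M_i(t)=\sum_{n\geq0}|M(i,n)|t^n$. Let $C(t)=\sum_{n\geq0}\frac{1}{n+1}\binom{2n}{n}t^n$ and $D(t)=tC^2(t)$. Then $$M_i(t)=\frac{D^i(t)}{1-4t}.$$ *)

theory Defs
  imports "HOL-Computational_Algebra.Formal_Power_Series"
begin

text \<open>A walk of length n with steps (1,1),(1,-1) is encoded by its list of vertical steps,
  each in {1,-1}. Starting at (0,h), after k steps it is at (k, h + sum of first k steps).\<close>

definition steps :: "nat \<Rightarrow> int list set" where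
  "steps n = {s. length s = n \<and> set s \<subseteq> {1, -1}}"

definition walk_points :: "int \<Rightarrow> int list \<Rightarrow> (int \<times> int) set" where
  "walk_points h s = {(int k, h + sum_list (take k s)) | k. k \<le> length s}"

definition M :: "nat \<Rightarrow> nat \<Rightarrow> (int list \<times> int list) set" where
  "M i n = {(s1, s2). s1 \<in> steps n \<and> s2 \<in> steps n \<and>
             walk_points 0 s1 \<inter> walk_points (2 * int i) s2 \<noteq> {}}"

definition M_gf :: "nat \<Rightarrow> real fps" where
  "M_gf i = Abs_fps (\<lambda>n. real (card (M i n)))"

definition C_gf :: "real fps" where
  "C_gf = Abs_fps (\<lambda>n. real ((2 * n) choose n) / real (n + 1))"

definition D_gf :: "real fps" where
  "D_gf = fps_X * C_gf ^ 2"

end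

theory Submission
  imports Defs
begin
unbundle fps_syntax

definition P :: "int \<Rightarrow> int list \<Rightarrow> int list \<Rightarrow> bool" where
  "P h s1 s2 = (\<exists>k\<le>length s1. sum_list (take k s1) = h + sum_list (take k s2))"

definition Q :: "int \<Rightarrow> nat \<Rightarrow> (int list \<times> int list) set" where
  "Q h n = {(s1,s2). s1 \<in> steps n \<and> s2 \<in> steps n \<and> P h s1 s2}"

lemma wp_iff:
  assumes "length s1 = length s2"
  shows "(walk_points 0 s1 \<inter> walk_points h s2 \<noteq> {}) = P h s1 s2"
  using assms unfolding walk_points_def P_def by auto

lemma M_Q: "M j n = Q (2 * int j) n"
proof -
  have "\<And>s1 s2. s1 \<in> steps n \<Longrightarrow> s2 \<in> steps n \<Longrightarrow>
    (walk_points 0 s1 \<inter> walk_points (2 * int j) s2 \<noteq> {}) = P (2 * int j) s1 s2"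
    by (rule wp_iff) (simp add: steps_def)
  then show ?thesis unfolding M_def Q_def by blast
qed

lemma P_Cons: "P h (a#s1) (b#s2) = (h = 0 \<or> P (h + b - a) s1 s2)"
  unfolding P_def
proof
  assume "\<exists>k\<le>length (a # s1). sum_list (take k (a # s1)) = h + sum_list (take k (b # s2))"
  then obtain k where k: "k \<le> length (a # s1)"
    "sum_list (take k (a # s1)) = h + sum_list (take k (b # s2))" by blast
  show "h = 0 \<or> (\<exists>k\<le>length s1. sum_list (take k s1) = h + b - a + sum_list (take k s2))"
  proof (cases k)
    case 0
    then show ?thesis using k by simp
  next
    case (Suc k')
    then show ?thesis using k by (auto intro!: exI[of _ k'])
  qed
next
  assume "h = 0 \<or> (\<exists>k\<le>length s1. sum_list (take k s1) = h + b - a + sum_list (take k s2))"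
  then show "\<exists>k\<le>length (a # s1). sum_list (take k (a # s1)) = h + sum_list (take k (b # s2))"
  proof
    assume h0: "h = 0"
    show ?thesis by (rule exI[of _ 0]) (simp add: h0)
  next
    assume "\<exists>k\<le>length s1. sum_list (take k s1) = h + b - a + sum_list (take k s2)"
    then obtain k where "k \<le> length s1" "sum_list (take k s1) = h + b - a + sum_list (take k s2)"
      by blast
    then show ?thesis by (intro exI[of _ "Suc k"]) auto
  qed
qed

lemma steps_Suc: "s \<in> steps (Suc n) \<longleftrightarrow> (\<exists>a t. s = a # t \<and> a \<in> {1,-1} \<and> t \<in> steps n)"
  by (cases s) (auto simp: steps_def)

lemma steps_alt: "steps n = {xs. set xs \<subseteq> {1,-1} \<and> length xs = n}"
  by (auto simp: steps_def)

lemma finite_steps: "finite (steps n)"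
  unfolding steps_alt by (rule finite_lists_length_eq) simp

lemma card_steps: "card (steps n) = 2 ^ n"
  unfolding steps_alt by (subst card_lists_length_eq) (auto simp: numeral_2_eq_2)

lemma finite_Q: "finite (Q h n)"
proof -
  have "Q h n \<subseteq> steps n \<times> steps n" by (auto simp: Q_def)
  then show ?thesis using finite_subset finite_steps by blast
qed

lemma card_Q0: "card (Q 0 n) = 4 ^ n"
proof -
  have "Q 0 n = steps n \<times> steps n"
    by (auto simp: Q_def P_def intro: exI[of _ 0])
  then show ?thesis by (simp add: card_cartesian_product card_steps power_mult_distrib[symmetric])
qed

lemma Q_Suc:
  assumes "h \<noteq> 0"
  shows "Q h (Suc n) = (\<lambda>((a,b),(s1,s2)). (a#s1, b#s2)) `
     (SIGMA ab:{1,-1::int}\<times>{1,-1::int}. Q (h + snd ab - fst ab) n)"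
proof (intro equalityI subsetI)
  fix p assume "p \<in> Q h (Suc n)"
  then obtain x y where p: "p = (x,y)" and x: "x \<in> steps (Suc n)" and y: "y \<in> steps (Suc n)"
    and Pxy: "P h x y" by (auto simp: Q_def)
  from x obtain a s1 where a: "x = a # s1" "a \<in> {1,-1}" "s1 \<in> steps n" by (auto simp: steps_Suc)
  from y obtain b s2 where b: "y = b # s2" "b \<in> {1,-1}" "s2 \<in> steps n" by (auto simp: steps_Suc)
  show "p \<in> (\<lambda>((a,b),(s1,s2)). (a#s1, b#s2)) `
     (SIGMA ab:{1,-1::int}\<times>{1,-1::int}. Q (h + snd ab - fst ab) n)"
    using a b Pxy assms p
    by (intro image_eqI[of _ _ "((a,b),(s1,s2))"]) (auto simp: Q_def P_Cons)
next
  fix p assume "p \<in> (\<lambda>((a,b),(s1,s2)). (a#s1, b#s2)) `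
     (SIGMA ab:{1,-1::int}\<times>{1,-1::int}. Q (h + snd ab - fst ab) n)"
  then show "p \<in> Q h (Suc n)" by (auto simp: Q_def P_Cons steps_Suc)
qed

lemma card_Q_Suc:
  assumes "h \<noteq> 0"
  shows "card (Q h (Suc n)) = card (Q (h + 1 - 1) n) + card (Q (h + (-1) - 1) n)
     + card (Q (h + 1 - (-1)) n) + card (Q (h + (-1) - (-1)) n)"
proof -
  have inj: "inj_on (\<lambda>((a,b),(s1,s2)). (a#s1, b#s2))
     (SIGMA ab:{1,-1::int}\<times>{1,-1::int}. Q (h + snd ab - fst ab) n)"
    by (auto simp: inj_on_def)
  have e: "{1,-1::int}\<times>{1,-1::int} = {(1,1),(1,-1),(-1,1),(-1,-1)}" by auto
  have "card (Q h (Suc n)) = card (SIGMA ab:{1,-1::int}\<times>{1,-1::int}. Q (h + snd ab - fst ab) n)"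
    unfolding Q_Suc[OF assms] by (rule card_image[OF inj])
  also have "\<dots> = (\<Sum>ab\<in>{1,-1::int}\<times>{1,-1::int}. card (Q (h + snd ab - fst ab) n))"
    by (rule card_SigmaI) (auto simp: finite_Q)
  also have "\<dots> = card (Q (h + 1 - 1) n) + card (Q (h + (-1) - 1) n)
     + card (Q (h + 1 - (-1)) n) + card (Q (h + (-1) - (-1)) n)"
    unfolding e by simp
  finally show ?thesis .
qed

lemma M_rec:
  assumes "j \<ge> 1"
  shows "real (card (M j (Suc n))) = real (card (M (j-1) n)) + 2 * real (card (M j n))
    + real (card (M (j+1) n))"
proof -
  have h: "2 * int j \<noteq> 0" using assms by simp
  have e1: "2 * int j + 1 - 1 = 2 * int j" by simp
  have e2: "2 * int j + (-1) - 1 = 2 * int (j - 1)" using assms by simp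
  have e3: "2 * int j + 1 - (-1) = 2 * int (j + 1)" by simp
  have e4: "2 * int j + (-1) - (-1) = 2 * int j" by simp
  show ?thesis
    unfolding M_Q card_Q_Suc[OF h] e1 e2 e3 e4 by simp
qed

lemma M_0: "card (M 0 n) = 4 ^ n"
  using card_Q0 by (simp add: M_Q)

lemma M_j0: "j \<ge> 1 \<Longrightarrow> card (M j 0) = 0"
proof -
  assume "j \<ge> 1"
  then have "M j 0 = {}" by (auto simp: M_Q Q_def P_def steps_def)
  then show ?thesis by simp
qed

lemma cb_rec: "real ((2 * Suc m) choose Suc m) = real ((2*m) choose m) * (4 * real m + 2) / (real m + 1)"
proof -
  have a: "real ((2*m) choose m) = fact (2*m) / (fact m * fact (2*m - m))"
    by (rule binomial_fact) simp
  have b: "real ((2 * Suc m) choose Suc m) = fact (2*Suc m) / (fact (Suc m) * fact (2*Suc m - Suc m))"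
    by (rule binomial_fact) simp
  have d1: "2*m - m = m" "2 * Suc m - Suc m = Suc m" by auto
  have c: "(fact (2*Suc m) :: real) = fact (2*m) * (2*real m+1) * (2*real m+2)"
    by (simp add: fact_Suc algebra_simps numeral_2_eq_2)
  have p: "(fact m :: real) > 0" "real m + 1 > 0" by auto
  show ?thesis unfolding a b c d1 using p
    by (simp add: fact_Suc divide_simps) (simp add: algebra_simps)
qed

lemma aux: "-2*c/(x+1) * ((1/2 - (x+1)) * (-4)/(x+2)) = -2*(c*(4*x+2)/(x+1))/((x::real)+2)"
proof -
  have e: "(1/2 - (x+1)) * (-4) = 4*x+2" by (simp add: algebra_simps)
  show ?thesis unfolding e by (simp add: mult_ac) (simp add: minus_divide_left algebra_simps)
qed

lemma gb_half: "((1/2::real) gchoose Suc m) * (-4)^Suc m = -2 * real ((2*m) choose m) / real (m+1)"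
proof (induction m)
  case 0
  then show ?case by simp
next
  case (Suc m)
  define g where "g = ((1/2::real) gchoose Suc m)"
  define g' where "g' = ((1/2::real) gchoose Suc (Suc m))"
  have "(1/2::real) * g = of_nat (Suc m) * g + of_nat (Suc (Suc m)) * g'"
    unfolding g_def g'_def by (rule gbinomial_mult_1)
  then have r: "g' = (1/2 - real (Suc m)) * g / real (Suc (Suc m))"
    by (simp only: eq_divide_eq of_nat_Suc) (simp add: algebra_simps)
  have "g' * (-4)^Suc (Suc m) = (g * (-4)^Suc m) * ((1/2 - real (Suc m)) * (-4) / real (Suc (Suc m)))"
    unfolding r power_Suc by (simp add: divide_simps)
  also have "\<dots> = -2 * real ((2*m) choose m) / real (m+1) * ((1/2 - real (Suc m)) * (-4) / real (Suc (Suc m)))"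
    unfolding g_def by (simp only: Suc.IH)
  also have "\<dots> = -2 * real ((2 * Suc m) choose Suc m) / real (Suc m + 1)"
  proof -
    have q: "real (m+1) = real m + 1" "real (Suc m) = real m + 1" "real (Suc (Suc m)) = real m + 2"
      "real (Suc m + 1) = real m + 2" by simp_all
    show ?thesis unfolding cb_rec q by (rule aux)
  qed
  finally show ?case unfolding g'_def .
qed
lemma ring_id: "(x::'a::comm_ring_1) * (4 * (1 + x*y^2 - y)) = (1 - 2*(x*y))^2 - (1 - 4*x)"
  by (simp add: algebra_simps power2_eq_square)

lemma C_rec: "C_gf = 1 + fps_X * C_gf ^ 2"
proof -
  define B where "B = Abs_fps (\<lambda>n. ((1/2::real) gchoose n) * (-4)^n)"
  have Bc: "B = fps_binomial (1/2) oo (fps_const (-4) * fps_X)"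
    unfolding fps_compose_linear B_def by (simp add: mult.commute)
  have "B^2 = (fps_binomial (1/2))^2 oo (fps_const (-4) * fps_X)"
    unfolding Bc power2_eq_square by (rule fps_compose_mult_distrib[symmetric]) simp
  also have "(fps_binomial (1/2::real))^2 = 1 + fps_X"
    by (simp add: fps_binomial_power fps_binomial_1)
  also have "(1 + fps_X) oo (fps_const (-4) * fps_X) = (1 - fps_const 4 * fps_X :: real fps)"
    unfolding fps_compose_linear
    apply (rule fps_ext)
    subgoal for n by (cases n) (auto simp: fps_X_nth)
    done
  finally have B2: "B^2 = 1 - fps_const 4 * fps_X" .
  have BC: "B = 1 - 2 * (fps_X * C_gf)"
  proof (rule fps_ext)
    fix n show "B $ n = (1 - 2 * (fps_X * C_gf)) $ n"
    proof (cases n)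
      case 0 then show ?thesis by (simp add: B_def)
    next
      case (Suc m)
      then show ?thesis using gb_half[of m]
        by (simp add: B_def C_gf_def numeral_fps_const)
    qed
  qed
  have "fps_X * (fps_const 4 * (1 + fps_X * C_gf ^ 2 - C_gf)) = B^2 - (1 - fps_const 4 * fps_X)"
    unfolding BC numeral_fps_const[symmetric] by (rule ring_id)
  also have "\<dots> = 0" using B2 by simp
  finally have "fps_X * (fps_const 4 * (1 + fps_X * C_gf ^ 2 - C_gf)) = 0" .
  moreover have "(fps_const 4 :: real fps) \<noteq> 0" by simp
  ultimately have "1 + fps_X * C_gf ^ 2 - C_gf = 0" by simp
  then show ?thesis by simp
qed
definition E :: "real fps" where "E = Abs_fps (\<lambda>n. 4^n)"

lemma E_mult: "(1 - 4 * fps_X) * E = 1"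
proof (rule fps_ext)
  fix n :: nat
  have e: "(1 - 4 * fps_X) * E = E - fps_const 4 * (fps_X * E)"
    by (simp add: algebra_simps numeral_fps_const)
  show "((1 - 4 * fps_X) * E) $ n = (1 :: real fps) $ n"
    unfolding e by (cases n) (simp_all add: E_def)
qed

lemma div_E: "f / (1 - 4 * fps_X) = f * E"
proof -
  have "(1 - 4 * fps_X :: real fps) $ 0 \<noteq> 0" by (simp add: numeral_fps_const)
  then have "f / (1 - 4 * fps_X) = f * inverse (1 - 4 * fps_X)" by (rule fps_divide_unit)
  also have "inverse (1 - 4 * fps_X) = E" by (rule fps_inverse_unique[OF E_mult])
  finally show ?thesis .
qed

lemma D_eq: "D_gf = fps_X * (1 + D_gf)^2"
proof -
  have "C_gf = 1 + D_gf" unfolding D_gf_def by (rule C_rec)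
  then show ?thesis unfolding D_gf_def by simp
qed

lemma D_0: "D_gf $ 0 = 0"
  by (simp add: D_gf_def)

lemma G_rec: "D_gf^(Suc k)*E = fps_X*(D_gf^k*E + 2*(D_gf^Suc k*E) + D_gf^Suc(Suc k)*E)"
proof -
  have "fps_X*(D_gf^k*E + 2*(D_gf^Suc k*E) + D_gf^Suc(Suc k)*E) = D_gf^k*E*(fps_X*(1+D_gf)^2)"
    by (simp add: algebra_simps power2_eq_square)
  also have "\<dots> = D_gf^(Suc k)*E" by (simp add: D_eq[symmetric] mult_ac)
  finally show ?thesis by simp
qed

lemma G_rec_nth: "(D_gf^(Suc k)*E) $ Suc n = (D_gf^k*E) $ n + 2*(D_gf^Suc k*E) $ n + (D_gf^Suc(Suc k)*E) $ n"
proof -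
  have "(D_gf^(Suc k)*E) $ Suc n = (fps_X*(D_gf^k*E + 2*(D_gf^Suc k*E) + D_gf^Suc(Suc k)*E)) $ Suc n"
    by (subst G_rec) (rule refl)
  also have "\<dots> = (D_gf^k*E + fps_const 2*(D_gf^Suc k*E) + D_gf^Suc(Suc k)*E) $ n"
    by (simp add: numeral_fps_const)
  also have "\<dots> = (D_gf^k*E) $ n + 2*(D_gf^Suc k*E) $ n + (D_gf^Suc(Suc k)*E) $ n"
    by (simp only: fps_add_nth fps_mult_left_const_nth)
  finally show ?thesis .
qed

lemma G_0: "(D_gf^(Suc k)*E) $ 0 = 0"
  by (simp add: D_0)

lemma main: "\<forall>j. real (card (M j n)) = (D_gf^j*E) $ n"
proof (induction n)
  case 0
  show ?case
  proof
    fix j show "real (card (M j 0)) = (D_gf^j*E) $ 0"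
    proof (cases j)
      case 0 then show ?thesis by (simp add: M_0 E_def)
    next
      case (Suc k) then show ?thesis using M_j0[of j] G_0[of k] by simp
    qed
  qed
next
  case (Suc n)
  show ?case
  proof
    fix j show "real (card (M j (Suc n))) = (D_gf^j*E) $ Suc n"
    proof (cases j)
      case 0 then show ?thesis by (simp add: M_0 E_def)
    next
      case (Suc k)
      have "real (card (M j (Suc n))) = real (card (M k n)) + 2 * real (card (M (Suc k) n))
        + real (card (M (Suc (Suc k)) n))" using M_rec[of j n] Suc by simp
      also have "\<dots> = (D_gf^j*E) $ Suc n" using Suc.IH Suc G_rec_nth[of k n] by simp
      finally show ?thesis .
    qed
  qed
qed

theorem corollary3p4:
  fixes i :: nat
  assumes "i \<ge> 1"
  shows "M_gf i = D_gf ^ i / (1 - 4 * fps_X)"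
proof -
  have "M_gf i = Abs_fps (\<lambda>n. (D_gf^i*E) $ n)"
    unfolding M_gf_def using main by simp
  also have "\<dots> = D_gf^i*E" by (simp add: fps_nth_inverse)
  finally show ?thesis by (simp add: div_E)
qed
end
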